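(* Let $\Gamma$ be a connected signed graph on $N$ vertices. Then the flexibility $\tau(\Gamma)=N+1-c(\Gamma_+)-c(\Gamma_-)$ equals the dimension of the group of cycles of mixed type, i.e. the dimension of the real linear span of the vectors $v^\gamma=\partial(\gamma)\in\mathbb{R}^N$ as $\gamma$ ranges over the cycles of $\Gamma$ (equivalently, $\tau(\Gamma)=\dim\operatorname{im}(\partial)$).
   Context: A signed graph $\Gamma$ is a finite simple undirected graph with vertex set $\{1,\dots,N\}$ in which every edge carries a nonzero real weight, which may be of either sign. $\Gamma_+$ (resp. $\Gamma_-$) is the spanning subgraph on all vertices containing exactly the positively (resp. negatively) weighted edges; $c(H)$ is the number of connected components of $H$. For an oriented closed cycle $\gamma$ in $\Gamma$ (an element of $H_1(\Gamma)$, extended linearly), define $v^\gamma=\partial(\gamma)\in\mathbb{R}^N$ by: $v^\gamma_i$ increases by one each time $\gamma$ enters vertex $i$ through a negatively weighted edge and exits through a positively weighted edge, decreases by one each time $\gamma$ enters $i$ through a positively weighted edge and exits through a negatively weighted edge, and receives no other contributions (so $v^\gamma_i=0$ at vertices not on $\gamma$ or where $\gamma$ enters and exits through edges of the same sign). Cycles with $v^\gamma\neq 0$ are called cycles of mixed type. *)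

theory Defs
  imports "HOL-Analysis.Analysis"
begin

text \<open>A signed graph on the finite vertex type 'n (so N = CARD('n)) is given by a
  weight function w; there is an edge between i and j iff w i j \<noteq> 0.
  Simple undirected: w symmetric with zero diagonal.\<close>

definition signed_graph :: "('n \<Rightarrow> 'n \<Rightarrow> real) \<Rightarrow> bool" where
  "signed_graph w \<longleftrightarrow> (\<forall>i j. w i j = w j i) \<and> (\<forall>i. w i i = 0)"

definition edge_rel :: "('n \<Rightarrow> 'n \<Rightarrow> real) \<Rightarrow> ('n \<times> 'n) set" where
  "edge_rel w = {(i, j). w i j \<noteq> 0}"

definition pos_rel :: "('n \<Rightarrow> 'n \<Rightarrow> real) \<Rightarrow> ('n \<times> 'n) set" where
  "pos_rel w = {(i, j). w i j > 0}"

definition neg_rel :: "('n \<Rightarrow> 'n \<Rightarrow> real) \<Rightarrow> ('n \<times> 'n) set" where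
  "neg_rel w = {(i, j). w i j < 0}"

definition num_components :: "('n \<times> 'n) set \<Rightarrow> nat" where
  "num_components E = card (UNIV // (E\<^sup>*))"

definition connected_sg :: "('n \<Rightarrow> 'n \<Rightarrow> real) \<Rightarrow> bool" where
  "connected_sg w \<longleftrightarrow> (\<forall>i j. (i, j) \<in> (edge_rel w)\<^sup>*)"

text \<open>An oriented closed walk v_0, ..., v_(k-1), v_0 given by the cyclic list of its vertices.\<close>
definition closed_walk :: "('n \<Rightarrow> 'n \<Rightarrow> real) \<Rightarrow> 'n list \<Rightarrow> bool" where
  "closed_walk w vs \<longleftrightarrow> vs \<noteq> [] \<and>
     (\<forall>j < length vs. w (vs ! j) (vs ! ((j + 1) mod length vs)) \<noteq> 0)"

definition passage_contrib :: "('n \<Rightarrow> 'n \<Rightarrow> real) \<Rightarrow> 'n list \<Rightarrow> nat \<Rightarrow> real" where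
  "passage_contrib w vs j =
     (let k = length vs;
          win = w (vs ! ((j + k - 1) mod k)) (vs ! j);
          wout = w (vs ! j) (vs ! ((j + 1) mod k))
      in if win < 0 \<and> wout > 0 then 1 else if win > 0 \<and> wout < 0 then -1 else 0)"

definition mixed_vec :: "('n::finite \<Rightarrow> 'n \<Rightarrow> real) \<Rightarrow> 'n list \<Rightarrow> real ^ 'n" where
  "mixed_vec w vs = (\<chi> i. \<Sum>j \<in> {j. j < length vs \<and> vs ! j = i}. passage_contrib w vs j)"

end

theory Submission
  imports Defs
begin


definition Dv :: "'n::finite \<Rightarrow> 'n \<Rightarrow> real^'n" where
  "Dv a b = (\<chi> i. (if i = a then 1 else 0) - (if i = b then 1 else 0))"

definition gens :: "('n::finite \<times> 'n) set \<Rightarrow> (real^'n) set" where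
  "gens E = {Dv a b | a b. (a, b) \<in> E}"

definition ind :: "'n::finite set \<Rightarrow> real^'n" where
  "ind K = (\<chi> i. if i \<in> K then 1 else 0)"

lemma sum_delta_vec: "(\<Sum>i\<in>UNIV. (if i = a then 1 else 0) * (y::real^'n::finite) $ i) = y$a"
proof -
  have "\<And>i. (if i = a then 1 else 0) * y $ i = (if i = a then y$i else 0)" by simp
  then show ?thesis by simp
qed

lemma inner_Dv: "Dv a b \<bullet> y = y$a - y$b"
  by (simp add: Dv_def inner_vec_def left_diff_distrib sum_subtractf sum_delta_vec)

lemma const_on_rtrancl:
  assumes "\<forall>(a,b)\<in>E. y$a = (y$b::real)" "(a,b) \<in> E\<^sup>*"
  shows "y$a = y$b"
  using assms(2) by (induction rule: rtrancl_induct) (use assms(1) in auto)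

lemma comp_dim:
  fixes E :: "('n::finite \<times> 'n) set"
  assumes symE: "sym E"
  shows "dim (span (gens E)) + card (UNIV // E\<^sup>*) = CARD('n)"
proof -
  let ?C = "{y \<in> UNIV. \<forall>x \<in> span (gens E). orthogonal x y}"
  have h: "dim ?C + dim (span (gens E)) = dim (UNIV :: (real^'n) set)"
    by (rule dim_subspace_orthogonal_to_vectors) auto
  have dU: "dim (UNIV :: (real^'n) set) = CARD('n)" by simp
  have eqv: "equiv UNIV (E\<^sup>*)"
    using symE by (simp add: equiv_def refl_rtrancl sym_rtrancl trans_rtrancl)
  have C: "?C = {y. \<forall>(a,b)\<in>E. y$a = y$b}"
  proof -
    have "(\<forall>x \<in> span (gens E). orthogonal x y) \<longleftrightarrow> (\<forall>x \<in> gens E. orthogonal x y)" for y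
    proof
      assume "\<forall>x \<in> gens E. orthogonal x y"
      then have "gens E \<subseteq> {x. orthogonal x y}" by auto
      moreover have "subspace {x. orthogonal x y}"
        by (simp add: subspace_def orthogonal_def inner_add_left)
      ultimately show "\<forall>x \<in> span (gens E). orthogonal x y" using span_minimal by blast
    qed (auto intro: span_base)
    then have "?C = {y. \<forall>x\<in>gens E. orthogonal x y}" by auto
    also have "\<dots> = {y. \<forall>(a,b)\<in>E. y$a = y$b}"
      by (auto simp: gens_def orthogonal_def inner_Dv) (metis inner_Dv eq_iff_diff_eq_0)
    finally show ?thesis .
  qed
  define B where "B = ind ` (UNIV // E\<^sup>*)"
  have classes: "K \<in> UNIV // E\<^sup>* \<Longrightarrow> \<exists>x. K = E\<^sup>* `` {x}" for K
    by (auto simp: quotient_def)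
  have memK: "K \<in> UNIV // E\<^sup>* \<Longrightarrow> (a,b) \<in> E\<^sup>* \<Longrightarrow> a \<in> K \<longleftrightarrow> b \<in> K" for K a b
  proof -
    assume K: "K \<in> UNIV // E\<^sup>*" and ab: "(a,b) \<in> E\<^sup>*"
    obtain x where Kx: "K = E\<^sup>* `` {x}" using classes[OF K] by blast
    have ba: "(b,a) \<in> E\<^sup>*" using ab symE by (simp add: sym_rtrancl symD)
    show ?thesis unfolding Kx using ab ba by (auto intro: rtrancl_trans)
  qed
  have BC: "B \<subseteq> ?C"
  proof
    fix v assume "v \<in> B"
    then obtain K where K: "K \<in> UNIV // E\<^sup>*" "v = ind K" by (auto simp: B_def)
    have ab: "(a\<in>K) = (b\<in>K)" if "(a,b)\<in>E" for a b
      using memK[OF K(1) r_into_rtrancl[OF that]] .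
    have "\<forall>(a,b)\<in>E. v$a = v$b"
      using ab by (auto simp: ind_def K(2))
    then show "v \<in> ?C" using C by simp
  qed
  have CB: "?C \<subseteq> span B"
  proof
    fix y assume "y \<in> ?C"
    then have "y \<in> {y. \<forall>(a,b)\<in>E. y$a = y$b}" unfolding C .
    then have yc: "\<forall>(a,b)\<in>E. y$a = y$b" by simp
    define rep where "rep K = (SOME x. x \<in> K)" for K :: "'n set"
    have repK: "K \<in> UNIV // E\<^sup>* \<Longrightarrow> rep K \<in> K" for K
      using in_quotient_imp_non_empty[OF eqv] unfolding rep_def by (simp add: some_in_eq)
    have "y = (\<Sum>K\<in>UNIV // E\<^sup>*. y$(rep K) *\<^sub>R ind K)"
    proof (subst vec_eq_iff, intro allI)
      fix i
      let ?Ki = "E\<^sup>* `` {i}"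
      have Ki: "?Ki \<in> UNIV // E\<^sup>*" by (auto simp: quotient_def)
      have disj: "K \<in> UNIV // E\<^sup>* \<Longrightarrow> K \<noteq> ?Ki \<Longrightarrow> i \<notin> K" for K
      proof
        assume K: "K \<in> UNIV // E\<^sup>*" "K \<noteq> ?Ki" "i \<in> K"
        obtain x where Kx: "K = E\<^sup>* `` {x}" using classes[OF K(1)] by blast
        have "(x,i) \<in> E\<^sup>*" using K(3) Kx by simp
        then have "E\<^sup>* `` {x} = ?Ki" by (rule equiv_class_eq[OF eqv])
        then show False using K(2) Kx by simp
      qed
      have "(\<Sum>K\<in>UNIV // E\<^sup>*. y$(rep K) *\<^sub>R ind K) $ i = (\<Sum>K\<in>UNIV // E\<^sup>*. if K = ?Ki then y$(rep ?Ki) else 0)"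
        unfolding sum_component
      proof (rule sum.cong)
        fix K assume K: "K \<in> UNIV // E\<^sup>*"
        show "(y $ rep K *\<^sub>R ind K) $ i = (if K = ?Ki then y $ rep ?Ki else 0)"
        proof (cases "K = ?Ki")
          case True then show ?thesis by (simp add: ind_def)
        next
          case False then show ?thesis using disj[OF K False] by (simp add: ind_def)
        qed
      qed simp
      also have "\<dots> = y$(rep ?Ki)" using Ki by simp
      also have "\<dots> = y$i"
      proof -
        have "rep ?Ki \<in> ?Ki" using repK Ki by blast
        then have "(i, rep ?Ki) \<in> E\<^sup>*" by simp
        then show ?thesis using const_on_rtrancl[OF yc] by simp
      qed
      finally show "y $ i = (\<Sum>K\<in>UNIV // E\<^sup>*. y$(rep K) *\<^sub>R ind K) $ i" by simp
    qed
    also have "\<dots> \<in> span B"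
      by (intro span_sum span_scale span_base) (auto simp: B_def)
    finally show "y \<in> span B" .
  qed
  have indnz: "K \<in> UNIV // E\<^sup>* \<Longrightarrow> ind K \<noteq> 0" for K
  proof -
    assume "K \<in> UNIV // E\<^sup>*"
    then obtain i where "i \<in> K" using in_quotient_imp_non_empty[OF eqv] by blast
    then have "ind K $ i = 1" by (simp add: ind_def)
    then show ?thesis by auto
  qed
  have inj: "inj_on ind (UNIV // E\<^sup>*)"
  proof (rule inj_onI)
    fix K L assume "K \<in> UNIV // E\<^sup>*" "L \<in> UNIV // E\<^sup>*" "ind K = ind L"
    then have "\<forall>i. (i \<in> K) = (i \<in> L)" by (simp add: vec_eq_iff ind_def split: if_splits) blast
    then show "K = L" by blast
  qed
  have indep: "independent B"
  proof (rule pairwise_orthogonal_independent)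
    show "pairwise orthogonal B"
    proof (clarsimp simp: pairwise_def B_def)
      fix K L assume K: "K \<in> UNIV // E\<^sup>*" and L: "L \<in> UNIV // E\<^sup>*" and ne: "ind K \<noteq> ind L"
      then have "K \<noteq> L" by auto
      then have "K \<inter> L = {}" using eqv K L quotient_disj by blast
      then show "orthogonal (ind K) (ind L)"
        by (auto simp: orthogonal_def inner_vec_def ind_def intro!: sum.neutral)
    qed
    show "0 \<notin> B" using indnz by (auto simp: B_def)
  qed
  have "dim ?C = card B"
    by (rule dim_unique[OF BC CB indep refl])
  also have "card B = card (UNIV // E\<^sup>*)" using inj by (simp add: B_def card_image)
  finally show ?thesis using h dU by simp
qed



definition Ep :: "('n::finite \<Rightarrow> 'n \<Rightarrow> real) \<Rightarrow> 'n \<Rightarrow> 'n \<Rightarrow> real^'n" where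
  "Ep w a b = (if w a b > 0 then Dv a b else 0)"

definition En :: "('n::finite \<Rightarrow> 'n \<Rightarrow> real) \<Rightarrow> 'n \<Rightarrow> 'n \<Rightarrow> real^'n" where
  "En w a b = (if w a b < 0 then Dv a b else 0)"

fun pbw :: "('n::finite \<Rightarrow> 'n \<Rightarrow> real) \<Rightarrow> 'n list \<Rightarrow> real^'n" where
  "pbw w (a # b # xs) = Ep w a b + pbw w (b # xs)"
| "pbw w _ = 0"

fun iswalk :: "('n \<Rightarrow> 'n \<Rightarrow> real) \<Rightarrow> 'n list \<Rightarrow> bool" where
  "iswalk w (a # b # xs) = (w a b \<noteq> 0 \<and> iswalk w (b # xs))"
| "iswalk w _ = True"

lemma pbw_append:
  "xs \<noteq> [] \<Longrightarrow> ys \<noteq> [] \<Longrightarrow> pbw w (xs @ ys) = pbw w xs + Ep w (last xs) (hd ys) + pbw w ys"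
proof (induction xs)
  case Nil then show ?case by simp
next
  case (Cons x xs)
  show ?case
  proof (cases xs)
    case Nil
    then show ?thesis using Cons.prems by (cases ys) auto
  next
    case (Cons x' xs')
    then show ?thesis using Cons.IH Cons.prems by (simp add: algebra_simps)
  qed
qed

lemma iswalk_append:
  "xs \<noteq> [] \<Longrightarrow> ys \<noteq> [] \<Longrightarrow> iswalk w (xs @ ys) \<longleftrightarrow> iswalk w xs \<and> w (last xs) (hd ys) \<noteq> 0 \<and> iswalk w ys"
proof (induction xs)
  case Nil then show ?case by simp
next
  case (Cons x xs)
  show ?case
  proof (cases xs)
    case Nil
    then show ?thesis using Cons.prems by (cases ys) auto
  next
    case (Cons x' xs')
    then show ?thesis using Cons.IH Cons.prems by auto
  qed
qed

lemma Dv_swap: "Dv b a = - Dv a b"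
  by (simp add: Dv_def vec_eq_iff)

lemma Ep_swap:
  assumes sw: "\<forall>i j. w i j = w j i"
  shows "Ep w b a = - Ep w a b"
  unfolding Ep_def using Dv_swap[of b a] sw by simp

lemma pbw_rev:
  assumes sw: "\<forall>i j. w i j = w j i"
  shows "pbw w (rev xs) = - pbw w xs"
proof (induction xs)
  case Nil then show ?case by simp
next
  case (Cons x xs)
  show ?case
  proof (cases xs)
    case Nil then show ?thesis by simp
  next
    case (Cons y ys)
    have "pbw w (rev (x # xs)) = pbw w (rev xs @ [x])" by simp
    also have "\<dots> = pbw w (rev xs) + Ep w (last (rev xs)) x"
      using Cons by (subst pbw_append) auto
    also have "\<dots> = - pbw w xs + Ep w y x" using Cons Cons.IH by (simp add: last_rev)
    also have "\<dots> = - pbw w (x # xs)"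
      using Cons Ep_swap[OF sw, of y x] by simp
    finally show ?thesis .
  qed
qed

lemma iswalk_rev:
  assumes sw: "\<forall>i j. w i j = w j i"
  shows "iswalk w (rev xs) = iswalk w xs"
proof (induction xs)
  case Nil then show ?case by simp
next
  case (Cons x xs)
  show ?case
  proof (cases xs)
    case Nil then show ?thesis by simp
  next
    case (Cons y ys)
    have "iswalk w (rev (x # xs)) = iswalk w (rev xs @ [x])" by simp
    also have "\<dots> = (iswalk w (rev xs) \<and> w (last (rev xs)) x \<noteq> 0)"
      using Cons by (subst iswalk_append) auto
    also have "\<dots> = iswalk w (x # xs)" using Cons Cons.IH sw by (auto simp: last_rev)
    finally show ?thesis .
  qed
qed

lemma pbw_nth: "pbw w xs = (\<Sum>j<length xs - 1. Ep w (xs!j) (xs!Suc j))"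
proof (induction w xs rule: pbw.induct)
  case (1 w a b xs)
  have "pbw w (a#b#xs) = Ep w a b + pbw w (b#xs)" by simp
  also have "\<dots> = Ep w a b + (\<Sum>j<length xs. Ep w ((b#xs)!j) ((b#xs)!Suc j))" using 1 by simp
  also have "\<dots> = (\<Sum>j<Suc (length xs). Ep w ((a#b#xs)!j) ((a#b#xs)!Suc j))"
    by (subst sum.lessThan_Suc_shift) simp
  finally show ?case by simp
qed simp_all

lemma iswalk_nth: "iswalk w xs \<longleftrightarrow> (\<forall>j<length xs - 1. w (xs!j) (xs!Suc j) \<noteq> 0)"
  by (induction w xs rule: iswalk.induct) (simp_all add: All_less_Suc2)

lemma cl_nth:
  assumes "vs \<noteq> []" "j < length vs"
  shows "(vs @ [hd vs]) ! j = vs ! j" "(vs @ [hd vs]) ! Suc j = vs ! ((j+1) mod length vs)"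
proof -
  show "(vs @ [hd vs]) ! j = vs ! j" using assms by (simp add: nth_append)
  show "(vs @ [hd vs]) ! Suc j = vs ! ((j+1) mod length vs)"
  proof (cases "Suc j < length vs")
    case True then show ?thesis by (simp add: nth_append)
  next
    case False
    then have "Suc j = length vs" using assms by simp
    then show ?thesis using assms by (simp add: nth_append hd_conv_nth)
  qed
qed

lemma closed_walk_iff: "closed_walk w vs \<longleftrightarrow> vs \<noteq> [] \<and> iswalk w (vs @ [hd vs])"
proof (cases "vs = []")
  case True then show ?thesis by (simp add: closed_walk_def)
next
  case False
  have "iswalk w (vs @ [hd vs]) \<longleftrightarrow> (\<forall>j<length vs. w (vs!j) (vs!((j+1) mod length vs)) \<noteq> 0)"
    unfolding iswalk_nth using cl_nth[OF False] by simp
  then show ?thesis using False by (simp add: closed_walk_def)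
qed

lemma pbw_closed:
  assumes "vs \<noteq> []"
  shows "pbw w (vs @ [hd vs]) = (\<Sum>j<length vs. Ep w (vs!j) (vs!((j+1) mod length vs)))"
  unfolding pbw_nth using cl_nth[OF assms] by simp

lemma sum_rot:
  fixes k :: nat
  assumes "0 < k"
  shows "(\<Sum>j<k. g ((j+1) mod k)) = (\<Sum>j<k. (g j :: 'a::comm_monoid_add))"
proof -
  obtain m where k: "k = Suc m" using assms by (cases k) auto
  have "(\<Sum>j<k. g ((j+1) mod k)) = (\<Sum>j<m. g ((j+1) mod k)) + g ((m+1) mod k)"
    by (simp add: k)
  also have "(\<Sum>j<m. g ((j+1) mod k)) = (\<Sum>j<m. g (Suc j))"
    by (rule sum.cong) (auto simp: k)
  also have "g ((m+1) mod k) = g 0" by (simp add: k)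
  also have "(\<Sum>j<m. g (Suc j)) + g 0 = (\<Sum>j<k. g j)"
    unfolding k sum.lessThan_Suc_shift by (simp add: add.commute)
  finally show ?thesis .
qed

lemma rot1:
  assumes "j < (k::nat)"
  shows "((j+1) mod k + k - 1) mod k = j"
proof (cases "j + 1 < k")
  case True
  then have "(j+1) mod k = j+1" by simp
  then show ?thesis using assms by simp
next
  case False
  then have "j + 1 = k" using assms by simp
  then show ?thesis by simp
qed

lemma rot2:
  assumes "j < (k::nat)"
  shows "((j + k - 1) mod k + 1) mod k = j"
proof (cases "j = 0")
  case True
  then show ?thesis using assms by simp
next
  case False
  then have "(j + k - 1) mod k = j - 1" using assms
    by (metis Nat.add_diff_assoc2 One_nat_def Suc_leI add.commute less_imp_diff_less mod_add_self1 mod_less not_gr0)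
  then show ?thesis using assms False by simp
qed

lemma mixed_vec_eq:
  assumes cw: "closed_walk w vs"
  shows "mixed_vec w vs = (\<Sum>j<length vs. Ep w (vs!j) (vs!((j+1) mod length vs)))"
proof -
  define k where "k = length vs"
  have ne: "vs \<noteq> []" using cw by (simp add: closed_walk_def)
  then have k0: "0 < k" by (simp add: k_def)
  define out where "out j = w (vs!j) (vs!((j+1) mod k))" for j
  define inn where "inn j = w (vs!((j+k-1) mod k)) (vs!j)" for j
  have outnz: "j < k \<Longrightarrow> out j \<noteq> 0" for j
    using cw by (simp add: closed_walk_def out_def k_def)
  have inn_out: "j < k \<Longrightarrow> inn ((j+1) mod k) = out j" for j
    unfolding inn_def out_def using rot1 by simp
  have inn_out': "j < k \<Longrightarrow> inn (Suc j mod k) = out j" for j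
    using inn_out[of j] by simp
  have innnz: "j < k \<Longrightarrow> inn j \<noteq> 0" for j
  proof -
    assume j: "j < k"
    define m where "m = (j + k - 1) mod k"
    have m: "m < k" using k0 by (simp add: m_def)
    have "(m+1) mod k = j" using rot2[OF j] by (simp add: m_def)
    then have "inn j = out m" using inn_out[OF m] by simp
    then show ?thesis using outnz[OF m] by simp
  qed
  have pc: "j < k \<Longrightarrow> passage_contrib w vs j = (if out j > 0 then 1 else 0) - (if inn j > 0 then 1 else 0)" for j
  proof -
    assume j: "j < k"
    have "passage_contrib w vs j = (if inn j < 0 \<and> out j > 0 then 1 else if inn j > 0 \<and> out j < 0 then -1 else 0)"
      by (simp add: passage_contrib_def Let_def inn_def out_def k_def)
    then show ?thesis using outnz[OF j] innnz[OF j] by auto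
  qed
  define ii where "ii i j = (if vs!j = i then 1 else (0::real))" for i j
  show ?thesis
  proof (subst vec_eq_iff, intro allI)
    fix i
    have set_eq: "{j. j < length vs \<and> vs ! j = i} = {j\<in>{..<k}. vs ! j = i}" by (auto simp: k_def)
    have "mixed_vec w vs $ i = (\<Sum>j\<in>{j\<in>{..<k}. vs ! j = i}. passage_contrib w vs j)"
      by (simp add: mixed_vec_def set_eq)
    also have "\<dots> = (\<Sum>j<k. if vs ! j = i then passage_contrib w vs j else 0)"
      by (rule sum.inter_filter) simp
    also have "\<dots> = (\<Sum>j<k. (if out j > 0 then ii i j else 0) - (if inn j > 0 then ii i j else 0))"
      by (rule sum.cong) (auto simp: pc ii_def)
    also have "\<dots> = (\<Sum>j<k. (if out j > 0 then ii i j else 0)) - (\<Sum>j<k. (if inn j > 0 then ii i j else 0))"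
      by (rule sum_subtractf)
    also have "(\<Sum>j<k. (if inn j > 0 then ii i j else 0)) = (\<Sum>j<k. (if inn ((j+1) mod k) > 0 then ii i ((j+1) mod k) else 0))"
      using sum_rot[OF k0, of "\<lambda>j. if inn j > 0 then ii i j else 0"] by simp
    also have "\<dots> = (\<Sum>j<k. (if out j > 0 then ii i ((j+1) mod k) else 0))"
      by (rule sum.cong) (auto simp: inn_out')
    also have "(\<Sum>j<k. (if out j > 0 then ii i j else 0)) - \<dots> = (\<Sum>j<k. (if out j > 0 then ii i j - ii i ((j+1) mod k) else 0))"
      by (subst sum_subtractf[symmetric]) (rule sum.cong, auto)
    also have "\<dots> = (\<Sum>j<k. Ep w (vs!j) (vs!((j+1) mod k)) $ i)"
      by (rule sum.cong) (simp_all add: Ep_def Dv_def out_def ii_def)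
    also have "\<dots> = (\<Sum>j<length vs. Ep w (vs!j) (vs!((j+1) mod length vs))) $ i"
      by (simp add: k_def)
    finally show "mixed_vec w vs $ i = (\<Sum>j<length vs. Ep w (vs!j) (vs!((j+1) mod length vs))) $ i" .
  qed
qed



lemma Dv_sum_closed:
  assumes "vs \<noteq> []"
  shows "(\<Sum>j<length vs. Dv (vs!j) (vs!((j+1) mod length vs))) = 0"
proof (subst vec_eq_iff, intro allI)
  fix i
  define k where "k = length vs"
  have k0: "0 < k" using assms by (simp add: k_def)
  have "(\<Sum>j<length vs. Dv (vs!j) (vs!((j+1) mod length vs))) $ i
      = (\<Sum>j<k. (if i = vs!j then 1 else 0::real)) - (\<Sum>j<k. (if i = vs!((j+1) mod k) then 1 else 0))"
    by (simp add: Dv_def sum_subtractf k_def)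
  also have "(\<Sum>j<k. (if i = vs!((j+1) mod k) then 1 else 0::real)) = (\<Sum>j<k. (if i = vs!j then 1 else 0))"
    by (rule sum_rot[OF k0])
  finally show "(\<Sum>j<length vs. Dv (vs!j) (vs!((j+1) mod length vs))) $ i = 0 $ i" by simp
qed

lemma Ep_span: "Ep w a b \<in> span (gens (pos_rel w))"
  unfolding Ep_def by (auto intro!: span_base simp: gens_def pos_rel_def span_zero)

lemma En_span: "En w a b \<in> span (gens (neg_rel w))"
  unfolding En_def by (auto intro!: span_base simp: gens_def neg_rel_def span_zero)

lemma Ep_En: "w a b \<noteq> 0 \<Longrightarrow> Ep w a b = Dv a b - En w a b"
  by (auto simp: Ep_def En_def)

lemma mixed_pos: "closed_walk w vs \<Longrightarrow> mixed_vec w vs \<in> span (gens (pos_rel w))"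
  by (simp add: mixed_vec_eq span_sum Ep_span)

lemma mixed_neg:
  assumes cw: "closed_walk w vs"
  shows "mixed_vec w vs \<in> span (gens (neg_rel w))"
proof -
  define k where "k = length vs"
  have ne: "vs \<noteq> []" using cw by (simp add: closed_walk_def)
  have "mixed_vec w vs = (\<Sum>j<k. Ep w (vs!j) (vs!((j+1) mod k)))"
    by (simp add: mixed_vec_eq[OF cw] k_def)
  also have "\<dots> = (\<Sum>j<k. Dv (vs!j) (vs!((j+1) mod k)) - En w (vs!j) (vs!((j+1) mod k)))"
  proof (rule sum.cong)
    fix j assume "j \<in> {..<k}"
    then have "w (vs!j) (vs!((j+1) mod k)) \<noteq> 0" using cw by (simp add: closed_walk_def k_def)
    then show "Ep w (vs!j) (vs!((j+1) mod k)) = Dv (vs!j) (vs!((j+1) mod k)) - En w (vs!j) (vs!((j+1) mod k))"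
      by (rule Ep_En)
  qed simp
  also have "\<dots> = (\<Sum>j<k. Dv (vs!j) (vs!((j+1) mod k))) - (\<Sum>j<k. En w (vs!j) (vs!((j+1) mod k)))"
    by (rule sum_subtractf)
  also have "(\<Sum>j<k. Dv (vs!j) (vs!((j+1) mod k))) = 0"
    using Dv_sum_closed[OF ne] by (simp add: k_def)
  finally have "mixed_vec w vs = - (\<Sum>j<k. En w (vs!j) (vs!((j+1) mod k)))" by simp
  also have "\<dots> \<in> span (gens (neg_rel w))"
    by (intro span_neg span_sum En_span)
  finally show ?thesis .
qed

lemma walk_exists:
  assumes "(r, u) \<in> (edge_rel w)\<^sup>*"
  shows "\<exists>xs. xs \<noteq> [] \<and> hd xs = r \<and> last xs = u \<and> iswalk w xs"
  using assms
proof (induction rule: rtrancl_induct)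
  case base
  then show ?case by (intro exI[of _ "[r]"]) simp
next
  case (step u v)
  then obtain xs where xs: "xs \<noteq> []" "hd xs = r" "last xs = u" "iswalk w xs" by blast
  have "iswalk w (xs @ [v])" using xs step(2) by (simp add: iswalk_append edge_rel_def)
  then show ?case using xs by (intro exI[of _ "xs @ [v]"]) simp
qed

lemma closed_in_M:
  assumes "length xs \<ge> 2" "hd xs = last xs" "iswalk w xs"
  shows "pbw w xs \<in> span {mixed_vec w vs | vs. closed_walk w vs}"
proof -
  define vs where "vs = butlast xs"
  have ne: "vs \<noteq> []" using assms(1) by (cases xs) (auto simp: vs_def)
  have xne: "xs \<noteq> []" using assms(1) by auto
  have hdv: "hd vs = hd xs" using assms(1) by (cases xs) (auto simp: vs_def)
  have eq: "vs @ [hd vs] = xs" using hdv assms(2) xne by (simp add: vs_def)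
  have cw: "closed_walk w vs" using ne eq assms(3) by (simp add: closed_walk_iff)
  have mv: "mixed_vec w vs = pbw w xs"
    using mixed_vec_eq[OF cw] pbw_closed[OF ne] eq by simp
  have "\<exists>v. pbw w xs = mixed_vec w v \<and> closed_walk w v" using mv cw by metis
  then have "pbw w xs \<in> {mixed_vec w vs | vs. closed_walk w vs}" by blast
  then show ?thesis by (rule span_base)
qed

lemma sum_delta_scale:
  fixes f :: "'n::finite \<Rightarrow> real^'n"
  shows "(\<Sum>u\<in>UNIV. (if u = a then 1 else 0) *\<^sub>R f u) = f a"
proof -
  have "\<And>u. (if u = a then 1 else 0) *\<^sub>R f u = (if u = a then f u else 0)" by simp
  then show ?thesis by (simp add: sum.delta)
qed

lemma PQ_sub_M:
  fixes w :: "'n::finite \<Rightarrow> 'n \<Rightarrow> real"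
  assumes sw: "\<forall>i j. w i j = w j i" and conn: "connected_sg w"
  shows "span (gens (pos_rel w)) \<inter> span (gens (neg_rel w)) \<subseteq> span {mixed_vec w vs | vs. closed_walk w vs}"
proof -
  let ?M = "span {mixed_vec w vs | vs. closed_walk w vs}"
  define r where "r = (undefined :: 'n)"
  have "\<forall>u. \<exists>xs. xs \<noteq> [] \<and> hd xs = r \<and> last xs = u \<and> iswalk w xs"
  proof
    fix u
    have "(r, u) \<in> (edge_rel w)\<^sup>*" using conn by (simp add: connected_sg_def)
    then show "\<exists>xs. xs \<noteq> [] \<and> hd xs = r \<and> last xs = u \<and> iswalk w xs" by (rule walk_exists)
  qed
  then obtain W where W: "\<And>u. W u \<noteq> [] \<and> hd (W u) = r \<and> last (W u) = u \<and> iswalk w (W u)"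
    by metis
  define p where "p u = pbw w (W u)" for u
  have edge: "p a + Ep w a b - p b \<in> ?M" if ab: "w a b \<noteq> 0" for a b
  proof -
    define xs where "xs = W a @ rev (W b)"
    have l: "length xs \<ge> 2" using W[of a] W[of b] by (cases "W a"; cases "W b") (auto simp: xs_def)
    have h: "hd xs = last xs" using W[of a] W[of b] by (simp add: xs_def last_rev)
    have iw: "iswalk w xs" using W[of a] W[of b] ab
      by (simp add: xs_def iswalk_append iswalk_rev[OF sw] hd_rev)
    have "pbw w xs = p a + Ep w a b - p b"
      using W[of a] W[of b] by (simp add: xs_def pbw_append pbw_rev[OF sw] hd_rev p_def)
    then show ?thesis using closed_in_M[OF l h iw] by simp
  qed
  define L where "L y = (\<Sum>u\<in>UNIV. (y$u) *\<^sub>R p u)" for y :: "real^'n"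
  have Ladd: "L (x + y) = L x + L y" for x y by (simp add: L_def scaleR_add_left sum.distrib)
  have Lscale: "L (c *\<^sub>R x) = c *\<^sub>R L x" for c x by (simp add: L_def scaleR_sum_right)
  have L0: "L 0 = 0" by (simp add: L_def)
  have LDv: "L (Dv a b) = p a - p b" for a b
    by (simp add: L_def Dv_def scaleR_diff_left sum_subtractf sum_delta_scale)
  have subP: "subspace {y. L y + y \<in> ?M}"
    unfolding subspace_def
  proof (intro conjI ballI allI)
    show "0 \<in> {y. L y + y \<in> ?M}" by (simp add: L0 span_zero)
    fix x y assume "x \<in> {y. L y + y \<in> ?M}" "y \<in> {y. L y + y \<in> ?M}"
    then have "(L x + x) + (L y + y) \<in> ?M" by (simp add: span_add)
    then show "x + y \<in> {y. L y + y \<in> ?M}" by (simp add: Ladd algebra_simps)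
  next
    fix c x assume "x \<in> {y. L y + y \<in> ?M}"
    then have "c *\<^sub>R (L x + x) \<in> ?M" by (simp add: span_scale)
    then show "c *\<^sub>R x \<in> {y. L y + y \<in> ?M}" by (simp add: Lscale scaleR_add_right)
  qed
  have subQ: "subspace {y. L y \<in> ?M}"
    unfolding subspace_def
  proof (intro conjI ballI allI)
    show "0 \<in> {y. L y \<in> ?M}" by (simp add: L0 span_zero)
    fix x y assume "x \<in> {y. L y \<in> ?M}" "y \<in> {y. L y \<in> ?M}"
    then show "x + y \<in> {y. L y \<in> ?M}" by (simp add: Ladd span_add)
  next
    fix c x assume "x \<in> {y. L y \<in> ?M}"
    then show "c *\<^sub>R x \<in> {y. L y \<in> ?M}" by (simp add: Lscale span_scale)
  qed
  have gP: "gens (pos_rel w) \<subseteq> {y. L y + y \<in> ?M}"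
  proof
    fix y assume "y \<in> gens (pos_rel w)"
    then obtain a b where y: "y = Dv a b" and ab: "w a b > 0" by (auto simp: gens_def pos_rel_def)
    have "L y + y = p a + Ep w a b - p b" using ab by (simp add: y LDv Ep_def)
    then show "y \<in> {y. L y + y \<in> ?M}" using edge[of a b] ab by simp
  qed
  have gQ: "gens (neg_rel w) \<subseteq> {y. L y \<in> ?M}"
  proof
    fix y assume "y \<in> gens (neg_rel w)"
    then obtain a b where y: "y = Dv a b" and ab: "w a b < 0" by (auto simp: gens_def neg_rel_def)
    have "L y = p a + Ep w a b - p b" using ab by (simp add: y LDv Ep_def)
    then show "y \<in> {y. L y \<in> ?M}" using edge[of a b] ab by simp
  qed
  show ?thesis
  proof
    fix x assume "x \<in> span (gens (pos_rel w)) \<inter> span (gens (neg_rel w))"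
    then have "L x + x \<in> ?M" "L x \<in> ?M"
      using span_minimal[OF gP subP] span_minimal[OF gQ subQ] by auto
    then have "(L x + x) - L x \<in> ?M" by (rule span_diff)
    then show "x \<in> ?M" by simp
  qed
qed


lemma quot_univ: "(UNIV::'a set) // UNIV = {UNIV}"
  by (auto simp: quotient_def)

theorem mainTheorem7:
  fixes w :: "'n::finite \<Rightarrow> 'n \<Rightarrow> real"
  assumes "signed_graph w"
    and "connected_sg w"
  shows "int (dim (span {mixed_vec w vs | vs. closed_walk w vs}))
         = int CARD('n) + 1 - int (num_components (pos_rel w)) - int (num_components (neg_rel w))"
proof -
  have sw: "\<forall>i j. w i j = w j i" using assms(1) by (simp add: signed_graph_def)
  have symP: "sym (pos_rel w)" using sw by (auto simp: sym_def pos_rel_def)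
  have symN: "sym (neg_rel w)" using sw by (auto simp: sym_def neg_rel_def)
  have symE: "sym (edge_rel w)" using sw by (auto simp: sym_def edge_rel_def)
  let ?P = "span (gens (pos_rel w))"
  let ?Q = "span (gens (neg_rel w))"
  let ?S = "span (gens (edge_rel w))"
  let ?M = "span {mixed_vec w vs | vs. closed_walk w vs}"
  have M: "?M = ?P \<inter> ?Q"
  proof
    have "{mixed_vec w vs | vs. closed_walk w vs} \<subseteq> ?P \<inter> ?Q"
      using mixed_pos mixed_neg by blast
    moreover have "subspace (?P \<inter> ?Q)" by (intro subspace_inter subspace_span)
    ultimately show "?M \<subseteq> ?P \<inter> ?Q" by (rule span_minimal)
    show "?P \<inter> ?Q \<subseteq> ?M" by (rule PQ_sub_M[OF sw assms(2)])
  qed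
  have gE: "gens (edge_rel w) = gens (pos_rel w) \<union> gens (neg_rel w)"
  proof -
    have "edge_rel w = pos_rel w \<union> neg_rel w"
      by (auto simp: edge_rel_def pos_rel_def neg_rel_def)
    then show ?thesis by (auto simp: gens_def)
  qed
  have sumPQ: "{x + y |x y. x \<in> ?P \<and> y \<in> ?Q} = ?S" by (simp add: gE span_Un)
  have ds: "dim {x + y |x y. x \<in> ?P \<and> y \<in> ?Q} + dim (?P \<inter> ?Q) = dim ?P + dim ?Q"
    by (rule dim_sums_Int) (rule subspace_span)+
  then have ds': "dim ?S + dim ?M = dim ?P + dim ?Q" using sumPQ M by simp
  have cP: "dim ?P + card (UNIV // (pos_rel w)\<^sup>*) = CARD('n)" by (rule comp_dim[OF symP])
  have cQ: "dim ?Q + card (UNIV // (neg_rel w)\<^sup>*) = CARD('n)" by (rule comp_dim[OF symN])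
  have cE: "dim ?S + card (UNIV // (edge_rel w)\<^sup>*) = CARD('n)" by (rule comp_dim[OF symE])
  have rt: "(edge_rel w)\<^sup>* = UNIV" using assms(2) by (auto simp: connected_sg_def)
  have c1: "card (UNIV // (edge_rel w)\<^sup>*) = 1" by (simp add: rt quot_univ)
  have i1: "int (dim ?S) + int (dim ?M) = int (dim ?P) + int (dim ?Q)"
    using arg_cong[OF ds', of int] by simp
  have i2: "int (dim ?P) + int (card (UNIV // (pos_rel w)\<^sup>*)) = int CARD('n)"
    using arg_cong[OF cP, of int] by simp
  have i3: "int (dim ?Q) + int (card (UNIV // (neg_rel w)\<^sup>*)) = int CARD('n)"
    using arg_cong[OF cQ, of int] by simp
  have i4: "int (dim ?S) + 1 = int CARD('n)"
    using arg_cong[OF cE, of int] c1 by simp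
  show ?thesis unfolding num_components_def using i1 i2 i3 i4 by linarith
qed


end
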